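(* Let $\Gamma$ be a group with finite symmetric generating set $S$ acting on a countably infinite set $X$, let $\mu$ be a $\Gamma$-invariant mean on $X$, and let $R$ be a subgraph of the Schreier graph $S_\Gamma$ all of whose connected components have at most $C$ vertices. Suppose that in every component of $R$ the number of edges divided by the number of vertices is at least $\alpha$. Then $\alpha\,\mu(V(R))\le\mu_E(R)$.
   Context: A mean on $X$ is a finitely additive $\mu:2^X\to[0,1]$ with $\mu(X)=1$; $\Gamma$-invariant means $\mu(\gamma A)=\mu(A)$ for all $\gamma,A$. The Schreier graph $S_\Gamma$ has vertex set $X$ and an edge $\{x,y\}$ when $x\neq y$ and $s(x)=y$ for some $s\in S$. For a subgraph $R$, $\deg_R(x)$ is the degree of $x$ in $R$ ($0$ for $x\notin V(R)$) and $\mu_E(R)=\frac12\sum_{k\ge0}k\,\mu(\{x:\deg_R(x)=k\})$. *)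

theory Defs
  imports Complex_Main "HOL-Algebra.Group_Action" "HOL-Algebra.Generated_Groups" "HOL-Library.Countable_Set"
begin

definition is_mean :: "'x set \<Rightarrow> ('x set \<Rightarrow> real) \<Rightarrow> bool" where
  "is_mean X \<mu> \<longleftrightarrow>
     (\<forall>A. A \<subseteq> X \<longrightarrow> 0 \<le> \<mu> A \<and> \<mu> A \<le> 1) \<and> \<mu> X = 1 \<and>
     (\<forall>A B. A \<subseteq> X \<longrightarrow> B \<subseteq> X \<longrightarrow> A \<inter> B = {} \<longrightarrow> \<mu> (A \<union> B) = \<mu> A + \<mu> B)"

definition invariant_mean ::
  "('g, 'b) monoid_scheme \<Rightarrow> ('g \<Rightarrow> 'x \<Rightarrow> 'x) \<Rightarrow> 'x set \<Rightarrow> ('x set \<Rightarrow> real) \<Rightarrow> bool" where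
  "invariant_mean G \<phi> X \<mu> \<longleftrightarrow> is_mean X \<mu> \<and>
     (\<forall>g \<in> carrier G. \<forall>A. A \<subseteq> X \<longrightarrow> \<mu> (\<phi> g ` A) = \<mu> A)"

definition schreier_edges :: "('g \<Rightarrow> 'x \<Rightarrow> 'x) \<Rightarrow> 'g set \<Rightarrow> 'x set \<Rightarrow> 'x set set" where
  "schreier_edges \<phi> S X = {{x, y} | x y. x \<in> X \<and> y \<in> X \<and> x \<noteq> y \<and> (\<exists>s \<in> S. \<phi> s x = y)}"

definition is_subgraph :: "('g \<Rightarrow> 'x \<Rightarrow> 'x) \<Rightarrow> 'g set \<Rightarrow> 'x set \<Rightarrow> 'x set \<Rightarrow> 'x set set \<Rightarrow> bool" where
  "is_subgraph \<phi> S X V E \<longleftrightarrow> V \<subseteq> X \<and> E \<subseteq> schreier_edges \<phi> S X \<and> (\<forall>e \<in> E. e \<subseteq> V)"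

definition adj :: "'x set set \<Rightarrow> ('x \<times> 'x) set" where
  "adj E = {(x, y). {x, y} \<in> E}"

definition component :: "'x set set \<Rightarrow> 'x \<Rightarrow> 'x set" where
  "component E x = {y. (x, y) \<in> (adj E)\<^sup>*}"

definition component_edges :: "'x set set \<Rightarrow> 'x \<Rightarrow> 'x set set" where
  "component_edges E x = {e \<in> E. e \<subseteq> component E x}"

text \<open>Degree in R; 0 for vertices not in V(R) (they lie on no edge).\<close>
definition deg :: "'x set set \<Rightarrow> 'x \<Rightarrow> nat" where
  "deg E x = card {e \<in> E. x \<in> e}"

definition mu_E :: "'x set \<Rightarrow> ('x set \<Rightarrow> real) \<Rightarrow> 'x set set \<Rightarrow> real" where
  "mu_E X \<mu> E = (1/2) * (\<Sum>k. real k * \<mu> {x \<in> X. deg E x = k})"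

end

theory Submission imports Defs begin

lemma mean_add: "is_mean X \<mu> \<Longrightarrow> A \<subseteq> X \<Longrightarrow> B \<subseteq> X \<Longrightarrow> A \<inter> B = {} \<Longrightarrow> \<mu> (A \<union> B) = \<mu> A + \<mu> B"
  unfolding is_mean_def by blast

lemma mean_nonneg: "is_mean X \<mu> \<Longrightarrow> A \<subseteq> X \<Longrightarrow> 0 \<le> \<mu> A"
  unfolding is_mean_def by blast

lemma mean_empty: "is_mean X \<mu> \<Longrightarrow> \<mu> {} = 0"
  using mean_add[of X \<mu> "{}" "{}"] by simp

lemma mean_mono: "is_mean X \<mu> \<Longrightarrow> A \<subseteq> B \<Longrightarrow> B \<subseteq> X \<Longrightarrow> \<mu> A \<le> \<mu> B"
proof -
  assume m: "is_mean X \<mu>" and ab: "A \<subseteq> B" and bx: "B \<subseteq> X"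
  have "B = A \<union> (B - A)" using ab by blast
  moreover have "\<mu> (A \<union> (B - A)) = \<mu> A + \<mu> (B - A)"
    using mean_add[OF m, of A "B - A"] ab bx by auto
  ultimately have "\<mu> B = \<mu> A + \<mu> (B - A)" by simp
  moreover have "0 \<le> \<mu> (B - A)" using mean_nonneg[OF m, of "B - A"] bx by auto
  ultimately show ?thesis by simp
qed

lemma mean_union:
  assumes m: "is_mean X \<mu>" and fin: "finite I" and sub: "\<forall>i\<in>I. A i \<subseteq> X"
    and dis: "\<forall>i\<in>I. \<forall>j\<in>I. i \<noteq> j \<longrightarrow> A i \<inter> A j = {}"
  shows "\<mu> (\<Union>i\<in>I. A i) = (\<Sum>i\<in>I. \<mu> (A i))"
  using fin sub dis
proof (induction I rule: finite_induct)
  case empty then show ?case using mean_empty[OF m] by simp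
next
  case (insert i I)
  have d: "\<forall>i\<in>I. \<forall>j\<in>I. i \<noteq> j \<longrightarrow> A i \<inter> A j = {}" using insert.prems(2) by blast
  have "(\<Union>j\<in>insert i I. A j) = A i \<union> (\<Union>j\<in>I. A j)" by simp
  moreover have "A i \<inter> (\<Union>j\<in>I. A j) = {}" using insert.prems(2) insert.hyps(2)
    by auto
  ultimately have "\<mu> (\<Union>j\<in>insert i I. A j) = \<mu> (A i) + \<mu> (\<Union>j\<in>I. A j)"
    using mean_add[OF m, of "A i" "\<Union>j\<in>I. A j"] insert.prems(1) by auto
  then show ?case using insert d by simp
qed

lemma mean_comb_nonneg:
  assumes m: "is_mean X \<mu>" and fin: "finite I" and sub: "\<forall>i\<in>I. Q i \<subseteq> X"
    and pos: "\<forall>x\<in>X. 0 \<le> (\<Sum>i\<in>{i\<in>I. x \<in> Q i}. c i)"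
  shows "0 \<le> (\<Sum>i\<in>I. c i * \<mu> (Q i))"
proof -
  define B where "B J = {x\<in>X. {i\<in>I. x \<in> Q i} = J}" for J
  have dis: "\<forall>i\<in>P. \<forall>j\<in>P. i \<noteq> j \<longrightarrow> B i \<inter> B j = {}" for P unfolding B_def by auto
  have Qi: "\<mu> (Q i) = (\<Sum>J\<in>{J\<in>Pow I. i \<in> J}. \<mu> (B J))" if "i \<in> I" for i
  proof -
    have "Q i = (\<Union>J\<in>{J\<in>Pow I. i \<in> J}. B J)" using that sub unfolding B_def by auto
    moreover have "finite {J\<in>Pow I. i \<in> J}" using fin by simp
    ultimately show ?thesis using mean_union[OF m _ _ dis] unfolding B_def by auto
  qed
  have "(\<Sum>i\<in>I. c i * \<mu> (Q i)) = (\<Sum>i\<in>I. \<Sum>J\<in>{J\<in>Pow I. i \<in> J}. c i * \<mu> (B J))"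
    using Qi by (simp add: sum_distrib_left)
  also have "\<dots> = (\<Sum>J\<in>Pow I. \<Sum>i\<in>{i\<in>I. i \<in> J}. c i * \<mu> (B J))"
    by (rule sum.swap_restrict) (use fin in auto)
  also have "\<dots> = (\<Sum>J\<in>Pow I. \<mu> (B J) * (\<Sum>i\<in>J. c i))"
  proof (rule sum.cong)
    fix J assume "J \<in> Pow I"
    hence "{i\<in>I. i \<in> J} = J" by auto
    thus "(\<Sum>i\<in>{i\<in>I. i \<in> J}. c i * \<mu> (B J)) = \<mu> (B J) * (\<Sum>i\<in>J. c i)"
      by (simp add: sum_distrib_left sum_distrib_right mult.commute)
  qed simp
  also have "\<dots> \<ge> 0"
  proof (rule sum_nonneg)
    fix J assume J: "J \<in> Pow I"
    show "0 \<le> \<mu> (B J) * (\<Sum>i\<in>J. c i)"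
    proof (cases "B J = {}")
      case True then show ?thesis using mean_empty[OF m] by simp
    next
      case False
      then obtain x where x: "x \<in> X" "{i\<in>I. x \<in> Q i} = J" unfolding B_def by auto
      have "0 \<le> \<mu> (B J)" using mean_nonneg[OF m, of "B J"] unfolding B_def by auto
      moreover have "0 \<le> (\<Sum>i\<in>J. c i)" using pos x by metis
      ultimately show ?thesis by simp
    qed
  qed
  finally show ?thesis .
qed


lemma adj_sym: "(x, y) \<in> adj E \<Longrightarrow> (y, x) \<in> adj E"
  unfolding adj_def by (simp add: insert_commute)

lemma rtr_sym: "(x, y) \<in> (adj E)\<^sup>* \<Longrightarrow> (y, x) \<in> (adj E)\<^sup>*"
proof (induction rule: rtrancl_induct)
  case base then show ?case by simp
next
  case (step z w)
  have "(w, z) \<in> adj E" using step.hyps(2) by (rule adj_sym)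
  thus ?case using step.IH by (rule converse_rtrancl_into_rtrancl)
qed

lemma comp_self: "x \<in> component E x"
  unfolding component_def by simp

lemma comp_sym: "y \<in> component E x \<Longrightarrow> x \<in> component E y"
  unfolding component_def by (simp add: rtr_sym)

lemma comp_eq: "y \<in> component E x \<Longrightarrow> component E y = component E x"
proof -
  assume "y \<in> component E x"
  hence xy: "(x, y) \<in> (adj E)\<^sup>*" and yx: "(y, x) \<in> (adj E)\<^sup>*"
    unfolding component_def by (auto simp: rtr_sym)
  show ?thesis unfolding component_def
    using rtrancl_trans[OF xy] rtrancl_trans[OF yx] by blast
qed

lemma comp_sub:
  assumes EV: "\<forall>e\<in>E. e \<subseteq> V" and x: "x \<in> V"
  shows "component E x \<subseteq> V"
proof
  fix y assume "y \<in> component E x"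
  hence "(x, y) \<in> (adj E)\<^sup>*" unfolding component_def by simp
  thus "y \<in> V"
  proof (induction rule: rtrancl_induct)
    case base then show ?case using x .
  next
    case (step z w) then show ?case using EV unfolding adj_def by auto
  qed
qed

lemma edge_form:
  assumes "E \<subseteq> schreier_edges \<phi> S X" "e \<in> E"
  shows "\<exists>a b. e = {a, b} \<and> a \<noteq> b \<and> a \<in> X \<and> b \<in> X \<and> (\<exists>s\<in>S. \<phi> s a = b)"
  using assms unfolding schreier_edges_def by blast

lemma edge_in_comp:
  assumes "E \<subseteq> schreier_edges \<phi> S X" "e \<in> E" "y \<in> e"
  shows "e \<subseteq> component E y"
proof -
  obtain a b where ab: "e = {a, b}" using edge_form[OF assms(1,2)] by blast
  have "(y, a) \<in> adj E \<or> y = a" "(y, b) \<in> adj E \<or> y = b"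
    using assms(2,3) ab unfolding adj_def by (auto simp: insert_commute)
  thus ?thesis using ab unfolding component_def by auto
qed

lemma in_comp_path:
  assumes "(a, b) \<in> (adj E)\<^sup>*"
  shows "(a, b) \<in> (adj E \<inter> (component E a \<times> component E a))\<^sup>*"
  using assms
proof (induction rule: rtrancl_induct)
  case base then show ?case by simp
next
  case (step z w)
  have "z \<in> component E a" "w \<in> component E a"
    using step.hyps unfolding component_def by auto
  hence "(z, w) \<in> adj E \<inter> (component E a \<times> component E a)" using step.hyps by auto
  thus ?case using step.IH by (meson rtrancl_into_rtrancl)
qed

lemma handshake:
  assumes sch: "E \<subseteq> schreier_edges \<phi> S X" and fin: "finite (component E x)"
  shows "(\<Sum>y\<in>component E x. real (deg E y)) = 2 * real (card (component_edges E x))"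
proof -
  let ?K = "component E x" and ?CE = "component_edges E x"
  have finCE: "finite ?CE" unfolding component_edges_def
    by (rule finite_subset[of _ "Pow ?K"]) (use fin in auto)
  have d: "deg E y = card {e\<in>?CE. y \<in> e}" if "y \<in> ?K" for y
  proof -
    have "{e\<in>E. y \<in> e} = {e\<in>?CE. y \<in> e}"
      using edge_in_comp[OF sch] comp_eq[OF that] unfolding component_edges_def by auto
    thus ?thesis unfolding deg_def by simp
  qed
  have "(\<Sum>y\<in>?K. real (deg E y)) = (\<Sum>y\<in>?K. \<Sum>e\<in>?CE. if y \<in> e then 1 else 0)"
    by (rule sum.cong) (auto simp: d sum.If_cases finCE Int_def)
  also have "\<dots> = (\<Sum>e\<in>?CE. \<Sum>y\<in>?K. if y \<in> e then 1 else 0)" by (rule sum.swap)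
  also have "\<dots> = (\<Sum>e\<in>?CE. 2)"
  proof (rule sum.cong)
    fix e assume e: "e \<in> ?CE"
    obtain a b where ab: "e = {a, b}" "a \<noteq> b"
      using edge_form[OF sch] e unfolding component_edges_def by blast
    have "e \<subseteq> ?K" using e unfolding component_edges_def by auto
    hence "?K \<inter> e = e" by auto
    hence "(\<Sum>y\<in>?K. if y \<in> e then 1 else (0::real)) = real (card e)"
      using fin by (simp add: sum.If_cases)
    thus "(\<Sum>y\<in>?K. if y \<in> e then 1 else (0::real)) = 2" using ab by simp
  qed simp
  finally show ?thesis by simp
qed


lemma ga_one:
  assumes "group_action G X \<phi>" "x \<in> X"
  shows "\<phi> \<one>\<^bsub>G\<^esub> x = x"
proof -
  interpret group_action G X \<phi> by fact
  have "(\<lambda>x \<in> X. x) = \<phi> \<one>\<^bsub>G\<^esub>" by (rule id_eq_one)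
  hence "(\<lambda>x \<in> X. x) x = \<phi> \<one>\<^bsub>G\<^esub> x" by simp
  thus ?thesis using assms(2) by simp
qed

lemma ga_inv_left:
  assumes "group G" "group_action G X \<phi>" "g \<in> carrier G" "x \<in> X"
  shows "\<phi> (inv\<^bsub>G\<^esub> g) (\<phi> g x) = x"
proof -
  interpret group_action G X \<phi> by fact
  have ig: "inv\<^bsub>G\<^esub> g \<in> carrier G" using assms(1,3) by (rule group.inv_closed)
  have "\<phi> (inv\<^bsub>G\<^esub> g \<otimes>\<^bsub>G\<^esub> g) x = \<phi> (inv\<^bsub>G\<^esub> g) (\<phi> g x)"
    using composition_rule[OF assms(4) ig assms(3)] .
  moreover have "inv\<^bsub>G\<^esub> g \<otimes>\<^bsub>G\<^esub> g = \<one>\<^bsub>G\<^esub>" using assms(1,3) by (rule group.l_inv)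
  ultimately show ?thesis using ga_one[OF assms(2,4)] by simp
qed

lemma ga_inv_right:
  assumes "group G" "group_action G X \<phi>" "g \<in> carrier G" "x \<in> X"
  shows "\<phi> g (\<phi> (inv\<^bsub>G\<^esub> g) x) = x"
proof -
  have ig: "inv\<^bsub>G\<^esub> g \<in> carrier G" using assms(1,3) by (rule group.inv_closed)
  have "inv\<^bsub>G\<^esub> (inv\<^bsub>G\<^esub> g) = g" using assms(1,3) by (rule group.inv_inv)
  thus ?thesis using ga_inv_left[OF assms(1,2) ig assms(4)] by simp
qed

primrec Fs :: "('g, 'b) monoid_scheme \<Rightarrow> 'g set \<Rightarrow> nat \<Rightarrow> 'g set" where
  "Fs G S 0 = {\<one>\<^bsub>G\<^esub>}"
| "Fs G S (Suc n) = Fs G S n \<union> (\<lambda>(s, g). s \<otimes>\<^bsub>G\<^esub> g) ` (S \<times> Fs G S n)"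

lemma Fs_fin: "finite S \<Longrightarrow> finite (Fs G S n)"
  by (induction n) auto

lemma Fs_sub: "group G \<Longrightarrow> S \<subseteq> carrier G \<Longrightarrow> Fs G S n \<subseteq> carrier G"
  by (induction n) (auto intro: group.is_monoid monoid.m_closed monoid.one_closed)

lemma Fs_mono: "m \<le> n \<Longrightarrow> Fs G S m \<subseteq> Fs G S n"
  by (rule lift_Suc_mono_le[of "Fs G S"]) auto

lemma path_elem:
  assumes grp: "group G" and ga: "group_action G X \<phi>" and SG: "S \<subseteq> carrier G"
    and Sinv: "\<forall>s \<in> S. inv\<^bsub>G\<^esub> s \<in> S" and sch: "E \<subseteq> schreier_edges \<phi> S X"
    and RE: "R \<subseteq> adj E" and aX: "a \<in> X"
  shows "(a, b) \<in> R ^^ n \<Longrightarrow> \<exists>g\<in>Fs G S n. \<phi> g a = b"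
proof (induction n arbitrary: b)
  case 0 then show ?case using ga_one[OF ga aX] by simp
next
  case (Suc n)
  from Suc.prems obtain z where az: "(a, z) \<in> R ^^ n" and zb: "(z, b) \<in> R" by (rule relpow_Suc_E)
  obtain g where g: "g \<in> Fs G S n" "\<phi> g a = z" using Suc.IH[OF az] by blast
  have gG: "g \<in> carrier G" using g(1) Fs_sub[OF grp SG] by blast
  have zX: "z \<in> X" using g(2) gG aX group_action.element_image[OF ga] by blast
  have "{z, b} \<in> E" using zb RE unfolding adj_def by auto
  then obtain c d s where cd: "{z, b} = {c, d}" "c \<noteq> d" "c \<in> X" "d \<in> X" "s \<in> S" "\<phi> s c = d"
    using edge_form[OF sch] by blast
  have "\<exists>t\<in>S. \<phi> t z = b"
  proof (cases "z = c")
    case True then show ?thesis using cd by (metis doubleton_eq_iff)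
  next
    case False
    hence zd: "z = d" "b = c" using cd by (auto simp: doubleton_eq_iff)
    have "\<phi> (inv\<^bsub>G\<^esub> s) z = b" using zd cd ga_inv_left[OF grp ga, of s c] SG by auto
    thus ?thesis using Sinv cd(5) by blast
  qed
  then obtain t where t: "t \<in> S" "\<phi> t z = b" by blast
  have "\<phi> (t \<otimes>\<^bsub>G\<^esub> g) a = \<phi> t (\<phi> g a)"
    using group_action.composition_rule[OF ga aX _ gG] t SG by blast
  moreover have "t \<otimes>\<^bsub>G\<^esub> g \<in> Fs G S (Suc n)" using t g by force
  ultimately show ?case using t g by auto
qed


theorem lemma3p2:
  fixes G :: "('g, 'b) monoid_scheme" and S :: "'g set" and X :: "'x set"
    and \<phi> :: "'g \<Rightarrow> 'x \<Rightarrow> 'x" and \<mu> :: "'x set \<Rightarrow> real"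
    and V :: "'x set" and E :: "'x set set" and C :: nat and \<alpha> :: real
  assumes "group G"
    and "finite S" and "S \<subseteq> carrier G" and "\<forall>s \<in> S. inv\<^bsub>G\<^esub> s \<in> S"
    and "generate G S = carrier G"
    and "group_action G X \<phi>"
    and "countable X" and "infinite X"
    and "invariant_mean G \<phi> X \<mu>"
    and "is_subgraph \<phi> S X V E"
    and "\<forall>x \<in> V. card (component E x) \<le> C"
    and "\<forall>x \<in> V. \<alpha> \<le> real (card (component_edges E x)) / real (card (component E x))"
  shows "\<alpha> * \<mu> V \<le> mu_E X \<mu> E"
proof -
  note grp = assms(1) and ga = assms(6)
  have mean: "is_mean X \<mu>" and invm: "\<forall>g\<in>carrier G. \<forall>A. A \<subseteq> X \<longrightarrow> \<mu> (\<phi> g ` A) = \<mu> A"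
    using assms(9) unfolding invariant_mean_def by auto
  have VX: "V \<subseteq> X" and sch: "E \<subseteq> schreier_edges \<phi> S X" and EV: "\<forall>e\<in>E. e \<subseteq> V"
    using assms(10) unfolding is_subgraph_def by auto
  have img: "\<phi> g x \<in> X" if "g \<in> carrier G" "x \<in> X" for g x
    using group_action.element_image[OF ga that] by blast
  define N where "N = card S"
  define D where "D k = {x\<in>X. deg E x = k}" for k
  have degb: "deg E x \<le> N" if xX: "x \<in> X" for x
  proof -
    have "{e\<in>E. x\<in>e} \<subseteq> (\<lambda>s. {x, \<phi> s x}) ` S"
    proof
      fix e assume "e \<in> {e\<in>E. x\<in>e}"
      hence eE: "e \<in> E" "x \<in> e" by auto
      then obtain c d s where e: "e = {c, d}" "c \<in> X" "s \<in> S" "\<phi> s c = d"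
        using edge_form[OF sch] by blast
      show "e \<in> (\<lambda>s. {x, \<phi> s x}) ` S"
      proof (cases "x = c")
        case True then show ?thesis using e by auto
      next
        case False
        hence xd: "x = d" using e eE by auto
        have "\<phi> (inv\<^bsub>G\<^esub> s) x = c" using ga_inv_left[OF grp ga, of s c] e xd assms(3) by auto
        moreover have "inv\<^bsub>G\<^esub> s \<in> S" using assms(4) e by auto
        ultimately show ?thesis using e xd by (auto simp: insert_commute intro!: image_eqI[where x="inv\<^bsub>G\<^esub> s"])
      qed
    qed
    hence "card {e\<in>E. x\<in>e} \<le> card ((\<lambda>s. {x, \<phi> s x}) ` S)"
      by (rule card_mono[OF finite_imageI[OF assms(2)]])
    also have "\<dots> \<le> card S" by (rule card_image_le[OF assms(2)])
    finally show ?thesis unfolding deg_def N_def .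
  qed
  have Dk_empty: "D k = {}" if "N < k" for k using degb that unfolding D_def by force
  have DX: "D k \<subseteq> X" for k unfolding D_def by auto
  have muE: "mu_E X \<mu> E = 1/2 * (\<Sum>k\<le>N. real k * \<mu> (D k))"
  proof -
    have "(\<lambda>k. real k * \<mu> {x\<in>X. deg E x = k}) = (\<lambda>k. real k * \<mu> (D k))" by (simp add: D_def)
    moreover have "(\<Sum>k. real k * \<mu> (D k)) = (\<Sum>k\<le>N. real k * \<mu> (D k))"
      by (rule suminf_finite) (auto simp: Dk_empty mean_empty[OF mean])
    ultimately show ?thesis unfolding mu_E_def by simp
  qed
  show ?thesis
  proof (cases "\<alpha> \<le> 0")
    case True
    have "0 \<le> \<mu> V" using mean_nonneg[OF mean VX] .
    hence "\<alpha> * \<mu> V \<le> 0" using True by (simp add: mult_nonpos_nonneg)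
    also have "0 \<le> mu_E X \<mu> E" unfolding muE using mean_nonneg[OF mean DX] by (auto intro!: sum_nonneg)
    finally show ?thesis .
  next
    case False
    hence apos: "0 < \<alpha>" by simp
    define K where "K x = component E x" for x
    have Kpos: "0 < card (K x)" if "x \<in> V" for x
    proof (rule ccontr)
      assume "\<not> 0 < card (K x)"
      hence "card (K x) = 0" by simp
      hence "\<alpha> \<le> 0" using assms(12) that unfolding K_def by auto
      thus False using apos by simp
    qed
    have Kfin: "finite (K x)" if "x \<in> V" for x using Kpos[OF that] card_ge_0_finite by blast
    have KV: "K x \<subseteq> V" if "x \<in> V" for x using comp_sub[OF EV that] unfolding K_def .
    define ld where "ld y = (SOME z. z \<in> K y)" for y
    have ld_in: "ld y \<in> K y" for y
      unfolding ld_def by (rule someI[of _ y]) (simp add: K_def comp_self)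
    have ld_eq: "ld y = ld x" if "y \<in> K x" for x y
      unfolding ld_def using comp_eq[of y E x] that unfolding K_def by simp
    have ldV: "ld y \<in> V" if "y \<in> V" for y using KV[OF that] ld_in by blast
    define M where "M = C * C"
    define F where "F = Fs G S M"
    have FG: "F \<subseteq> carrier G" unfolding F_def by (rule Fs_sub[OF grp assms(3)])
    have finF: "finite F" unfolding F_def by (rule Fs_fin[OF assms(2)])
    have path: "\<exists>g\<in>F. \<phi> g (ld y) = y" if yV: "y \<in> V" for y
    proof -
      let ?l = "ld y"
      have lV: "?l \<in> V" using ldV[OF yV] .
      have "y \<in> K ?l" using comp_sym[of "ld y" E y] ld_in[of y] unfolding K_def by simp
      hence "(?l, y) \<in> (adj E)\<^sup>*" unfolding K_def component_def by simp
      hence inR: "(?l, y) \<in> (adj E \<inter> (K ?l \<times> K ?l))\<^sup>*" using in_comp_path[of ?l y E] unfolding K_def by simp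
      let ?R = "adj E \<inter> (K ?l \<times> K ?l)"
      have finR: "finite ?R" using Kfin[OF lV] by blast
      have "card ?R \<le> card (K ?l \<times> K ?l)" using Kfin[OF lV] by (intro card_mono) auto
      also have "\<dots> = card (K ?l) * card (K ?l)" by (rule card_cartesian_product)
      also have "\<dots> \<le> C * C" using assms(11) lV unfolding K_def by (simp add: mult_le_mono)
      finally have cardR: "card ?R \<le> M" unfolding M_def .
      obtain n where n: "n \<le> card ?R" "(?l, y) \<in> ?R ^^ n"
        using inR rtrancl_finite_eq_relpow[OF finR] by blast
      obtain g where g: "g \<in> Fs G S n" "\<phi> g ?l = y"
        using path_elem[OF grp ga assms(3) assms(4) sch _ _ n(2)] lV VX by blast
      have "g \<in> F" using g(1) Fs_mono[of n M G S] n(1) cardR unfolding F_def by (meson le_trans subsetD)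
      thus ?thesis using g(2) by blast
    qed
    define a where "a y = (SOME g. g \<in> F \<and> \<phi> g (ld y) = y)" for y
    have aF: "a y \<in> F \<and> \<phi> (a y) (ld y) = y" if "y \<in> V" for y
    proof -
      have "\<exists>g. g \<in> F \<and> \<phi> g (ld y) = y" using path[OF that] by blast
      thus ?thesis unfolding a_def by (rule someI_ex)
    qed
    define I where "I = {..N} \<times> F"
    define P where "P i = {y\<in>V. deg E y = fst i \<and> a y = snd i}" for i
    define Q where "Q i = \<phi> (inv\<^bsub>G\<^esub> (snd i)) ` P i" for i
    have finI: "finite I" unfolding I_def using finF by simp
    have PX: "P i \<subseteq> X" for i unfolding P_def using VX by auto
    have invG: "inv\<^bsub>G\<^esub> (snd i) \<in> carrier G" if "i \<in> I" for i
      using that FG grp group.inv_closed unfolding I_def by fastforce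
    have PQ: "\<mu> (P i) = \<mu> (Q i)" if "i \<in> I" for i
      unfolding Q_def using invm invG[OF that] PX by simp
    have QX: "\<forall>i\<in>I. Q i \<subseteq> X"
    proof (intro ballI subsetI)
      fix i z assume iI: "i \<in> I" and z: "z \<in> Q i"
      then obtain y where "y \<in> P i" "z = \<phi> (inv\<^bsub>G\<^esub> (snd i)) y" unfolding Q_def by blast
      thus "z \<in> X" using img[OF invG[OF iI]] PX by blast
    qed
    have Vun: "V = (\<Union>i\<in>I. P i)"
    proof
      show "V \<subseteq> (\<Union>i\<in>I. P i)"
      proof
        fix y assume yV: "y \<in> V"
        hence "(deg E y, a y) \<in> I" unfolding I_def using degb VX aF by auto
        moreover have "y \<in> P (deg E y, a y)" unfolding P_def using yV by simp
        ultimately show "y \<in> (\<Union>i\<in>I. P i)" by blast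
      qed
    qed (auto simp: P_def)
    have disj: "\<forall>i\<in>I. \<forall>j\<in>I. i \<noteq> j \<longrightarrow> P i \<inter> P j = {}"
      unfolding P_def by (auto simp: prod_eq_iff)
    have muV: "\<mu> V = (\<Sum>i\<in>I. \<mu> (P i))"
      using mean_union[OF mean finI _ disj] PX Vun by simp
    have Dk: "real k * \<mu> (D k) = (\<Sum>g\<in>F. real k * \<mu> (P (k, g)))" if "k \<le> N" for k
    proof (cases "k = 0")
      case True then show ?thesis by simp
    next
      case False
      have "D k = (\<Union>g\<in>F. P (k, g))"
      proof
        show "D k \<subseteq> (\<Union>g\<in>F. P (k, g))"
        proof
          fix x assume x: "x \<in> D k"
          hence "card {e\<in>E. x\<in>e} \<noteq> 0" using False unfolding D_def deg_def by auto
          then obtain e where "e \<in> E" "x \<in> e" by (metis (no_types, lifting) Collect_empty_eq card.empty)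
          hence xV: "x \<in> V" using EV by blast
          hence "x \<in> P (k, a x)" using x unfolding P_def D_def by simp
          thus "x \<in> (\<Union>g\<in>F. P (k, g))" using aF[OF xV] by blast
        qed
        show "(\<Union>g\<in>F. P (k, g)) \<subseteq> D k" unfolding P_def D_def using VX by auto
      qed
      moreover have "\<forall>i\<in>F. \<forall>j\<in>F. i \<noteq> j \<longrightarrow> P (k, i) \<inter> P (k, j) = {}"
        unfolding P_def by auto
      ultimately have "\<mu> (D k) = (\<Sum>g\<in>F. \<mu> (P (k, g)))"
        using mean_union[OF mean finF, of "\<lambda>g. P (k, g)"] PX by simp
      thus ?thesis by (simp add: sum_distrib_left)
    qed
    have Dsum: "(\<Sum>k\<le>N. real k * \<mu> (D k)) = (\<Sum>i\<in>I. real (fst i) * \<mu> (P i))"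
    proof -
      have "(\<Sum>k\<le>N. real k * \<mu> (D k)) = (\<Sum>k\<le>N. \<Sum>g\<in>F. real k * \<mu> (P (k, g)))"
        using Dk by simp
      also have "\<dots> = (\<Sum>(k, g)\<in>{..N} \<times> F. real k * \<mu> (P (k, g)))"
        by (rule sum.cartesian_product)
      also have "\<dots> = (\<Sum>i\<in>I. real (fst i) * \<mu> (P i))"
        unfolding I_def by (rule sum.cong) auto
      finally show ?thesis .
    qed
    have key: "0 \<le> (\<Sum>i\<in>I. (real (fst i) / 2 - \<alpha>) * \<mu> (Q i))"
    proof (rule mean_comb_nonneg[OF mean finI QX], rule ballI)
      fix x assume xX: "x \<in> X"
      show "0 \<le> (\<Sum>i\<in>{i\<in>I. x \<in> Q i}. real (fst i) / 2 - \<alpha>)"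
      proof (cases "{i\<in>I. x \<in> Q i} = {}")
        case True show ?thesis unfolding True by simp
      next
        case False
        have memQ: "x \<in> Q i \<longleftrightarrow> \<phi> (snd i) x \<in> P i" if iI: "i \<in> I" for i
        proof
          assume "x \<in> Q i"
          then obtain y where y: "y \<in> P i" "x = \<phi> (inv\<^bsub>G\<^esub> (snd i)) y" unfolding Q_def by blast
          have "snd i \<in> carrier G" using iI FG unfolding I_def by auto
          hence "\<phi> (snd i) x = y" using y ga_inv_right[OF grp ga, of "snd i" y] PX by blast
          thus "\<phi> (snd i) x \<in> P i" using y by simp
        next
          assume h: "\<phi> (snd i) x \<in> P i"
          have "snd i \<in> carrier G" using iI FG unfolding I_def by auto
          hence "\<phi> (inv\<^bsub>G\<^esub> (snd i)) (\<phi> (snd i) x) = x" using ga_inv_left[OF grp ga _ xX] by blast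
          thus "x \<in> Q i" unfolding Q_def using h by (metis image_eqI)
        qed
        have ldP: "ld y = x" if iI: "i \<in> I" and y: "y \<in> P i" and yx: "y = \<phi> (snd i) x" for i y
        proof -
          have yV: "y \<in> V" and ay: "a y = snd i" using y unfolding P_def by auto
          have gG: "snd i \<in> carrier G" using iI FG unfolding I_def by auto
          have "\<phi> (snd i) (ld y) = \<phi> (snd i) x" using aF[OF yV] ay yx by simp
          moreover have "ld y \<in> X" using ldV[OF yV] VX by blast
          ultimately show ?thesis
            using group_action.inj_prop[OF ga gG] xX by (meson inj_onD)
        qed
        from False obtain i0 where i0: "i0 \<in> I" "x \<in> Q i0" by blast
        hence y0: "\<phi> (snd i0) x \<in> P i0" using memQ by blast
        have lx: "ld (\<phi> (snd i0) x) = x" using ldP[OF i0(1) y0] by simp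
        have y0V: "\<phi> (snd i0) x \<in> V" using y0 unfolding P_def by auto
        have xV: "x \<in> V" using ldV[OF y0V] lx by simp
        have xK: "x \<in> K (\<phi> (snd i0) x)" using ld_in[of "\<phi> (snd i0) x"] lx by simp
        have ldx: "ld x = x" using ld_eq[OF xK] lx by simp
        define h where "h (i::nat \<times> 'g) = \<phi> (snd i) x" for i
        have bij: "bij_betw h {i\<in>I. x \<in> Q i} (K x)"
          unfolding bij_betw_def
        proof
          show "inj_on h {i\<in>I. x \<in> Q i}"
          proof (rule inj_onI)
            fix i j assume i: "i \<in> {i\<in>I. x \<in> Q i}" and j: "j \<in> {i\<in>I. x \<in> Q i}" and hij: "h i = h j"
            have "h i \<in> P i" "h j \<in> P j" using i j memQ[of i] memQ[of j] unfolding h_def by auto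
            thus "i = j" using hij unfolding P_def by (auto simp: prod_eq_iff)
          qed
          show "h ` {i\<in>I. x \<in> Q i} = K x"
          proof
            show "h ` {i\<in>I. x \<in> Q i} \<subseteq> K x"
            proof
              fix y assume "y \<in> h ` {i\<in>I. x \<in> Q i}"
              then obtain i where i: "i \<in> I" "x \<in> Q i" "y = h i" by blast
              have yP: "y \<in> P i" using i memQ[OF i(1)] unfolding h_def by simp
              have "ld y = x" using ldP[OF i(1) yP] i(3) unfolding h_def by simp
              hence "x \<in> K y" using ld_in[of y] by simp
              thus "y \<in> K x" using comp_sym[of x E y] unfolding K_def by simp
            qed
            show "K x \<subseteq> h ` {i\<in>I. x \<in> Q i}"
            proof
              fix y assume yK: "y \<in> K x"
              have yV: "y \<in> V" using KV[OF xV] yK by blast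
              have ly: "ld y = x" using ld_eq[OF yK] ldx by simp
              let ?i = "(deg E y, a y)"
              have iI: "?i \<in> I" unfolding I_def using degb VX yV aF by auto
              have hi: "h ?i = y" unfolding h_def using aF[OF yV] ly by simp
              have "h ?i \<in> P ?i" using hi yV unfolding P_def by simp
              hence "x \<in> Q ?i" using memQ[OF iI] unfolding h_def by simp
              thus "y \<in> h ` {i\<in>I. x \<in> Q i}" using iI hi by (intro image_eqI[where x="?i"]) simp_all
            qed
          qed
        qed
        have "(\<Sum>i\<in>{i\<in>I. x \<in> Q i}. real (fst i) / 2 - \<alpha>)
            = (\<Sum>i\<in>{i\<in>I. x \<in> Q i}. real (deg E (h i)) / 2 - \<alpha>)"
        proof (rule sum.cong)
          fix i assume "i \<in> {i\<in>I. x \<in> Q i}"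
          hence "h i \<in> P i" using memQ[of i] unfolding h_def by simp
          thus "real (fst i) / 2 - \<alpha> = real (deg E (h i)) / 2 - \<alpha>" unfolding P_def by simp
        qed simp
        also have "\<dots> = (\<Sum>y\<in>K x. real (deg E y) / 2 - \<alpha>)"
          by (rule sum.reindex_bij_betw[OF bij])
        also have "\<dots> = (\<Sum>y\<in>K x. real (deg E y)) / 2 - \<alpha> * real (card (K x))"
          by (simp add: sum_subtractf sum_divide_distrib)
        also have "\<dots> = real (card (component_edges E x)) - \<alpha> * real (card (K x))"
          using handshake[OF sch Kfin[OF xV, unfolded K_def]] unfolding K_def by simp
        also have "\<dots> \<ge> 0"
        proof -
          have "\<alpha> \<le> real (card (component_edges E x)) / real (card (K x))"
            using assms(12) xV unfolding K_def by blast
          thus ?thesis using Kpos[OF xV] by (simp add: pos_le_divide_eq mult.commute)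
        qed
        finally show ?thesis .
      qed
    qed
    have "(\<Sum>i\<in>I. (real (fst i) / 2 - \<alpha>) * \<mu> (Q i)) = (\<Sum>i\<in>I. (real (fst i) / 2 - \<alpha>) * \<mu> (P i))"
      using PQ by simp
    also have "\<dots> = 1/2 * (\<Sum>i\<in>I. real (fst i) * \<mu> (P i)) - \<alpha> * (\<Sum>i\<in>I. \<mu> (P i))"
      by (simp add: sum_subtractf sum_distrib_left left_diff_distrib sum_divide_distrib)
    finally have "0 \<le> 1/2 * (\<Sum>i\<in>I. real (fst i) * \<mu> (P i)) - \<alpha> * (\<Sum>i\<in>I. \<mu> (P i))"
      using key by simp
    thus ?thesis unfolding muE Dsum muV by simp
  qed
qed

end
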